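(* Let $\alpha>\beta\geq 1$ be two real numbers such that $\alpha/\beta\notin\mathbb{N}$ and $[\alpha,\beta]\le \alpha/\beta$. Then there are no solutions to the equation $m\alpha=n\beta$ with $m$ and $n$ natural numbers such that $P^-(m)>\alpha$.
   Context: Height: for irrational $\rho>0$, $H(\rho)=\infty$; for $\rho=a/q$ with $a,q\in\mathbb{N}$, $\gcd(a,q)=1$, $H(\rho)=\max\{a,q\}$. Bracket: $[\alpha,\beta]=H(\alpha/\beta)/\max\{\alpha,\beta\}$. $P^-(n)$ denotes the smallest prime factor of $n\in\mathbb{N}$, with $P^-(1)=\infty$. *)

theory Defs
  imports "HOL-Analysis.Analysis" "HOL-Computational_Algebra.Primes"
begin

definition height :: "real \<Rightarrow> ereal" where
  "height \<rho> = (if \<rho> \<in> \<rat> then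
      (case quotient_of (SOME r. of_rat r = \<rho>) of (a, q) \<Rightarrow> ereal (real_of_int (max \<bar>a\<bar> q)))
    else \<infinity>)"

definition bracket :: "real \<Rightarrow> real \<Rightarrow> ereal" where
  "bracket \<alpha> \<beta> = height (\<alpha> / \<beta>) / ereal (max \<alpha> \<beta>)"

text \<open>Smallest prime factor, with value infinity at 1 (used only for positive n).\<close>
definition Pminus :: "nat \<Rightarrow> ereal" where
  "Pminus n = (if n = 1 then \<infinity> else ereal (real (Min {p. prime p \<and> p dvd n})))"

end

theory Submission
  imports Defs
begin

theorem lemma2p7:
  fixes \<alpha> \<beta> :: real
  assumes "\<alpha> > \<beta>" and "\<beta> \<ge> 1"
    and "\<not> (\<exists>k::nat. \<alpha> / \<beta> = real k)"
    and "bracket \<alpha> \<beta> \<le> ereal (\<alpha> / \<beta>)"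
  shows "\<not> (\<exists>m n :: nat. m > 0 \<and> n > 0 \<and> real m * \<alpha> = real n * \<beta> \<and> Pminus m > ereal \<alpha>)"
proof
  assume "\<exists>m n :: nat. m > 0 \<and> n > 0 \<and> real m * \<alpha> = real n * \<beta> \<and> Pminus m > ereal \<alpha>"
  then obtain m n :: nat where mpos: "m > 0" and npos: "n > 0" and eq: "real m * \<alpha> = real n * \<beta>"
    and big: "Pminus m > ereal \<alpha>" by blast
  have bpos: "\<beta> > 0" using assms by linarith
  have apos: "\<alpha> > 0" using assms by linarith
  define r where "r = Fract (int n) (int m)"
  have rval: "of_rat r = \<alpha> / \<beta>"
    using eq mpos bpos unfolding r_def by (simp add: of_rat_rat field_simps)
  have inQ: "\<alpha> / \<beta> \<in> \<rat>" using rval by (metis Rats_of_rat)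
  have some: "(SOME r. of_rat r = \<alpha> / \<beta>) = r"
    using rval by (metis (mono_tags, lifting) of_rat_eq_iff someI_ex)
  obtain a q where qo: "quotient_of r = (a, q)" by (cases "quotient_of r") auto
  have qpos: "q > 0" using qo quotient_of_denom_pos by blast
  have cop: "coprime a q" using qo quotient_of_coprime by blast
  have rq: "r = of_int a / of_int q" using qo quotient_of_div by blast
  have aq: "\<alpha> / \<beta> = real_of_int a / real_of_int q"
    using rval rq by (simp add: of_rat_divide)
  have gt1: "\<alpha> / \<beta> > 1" using assms bpos by simp
  hence "real_of_int a > real_of_int q" using aq qpos by (simp add: field_simps)
  hence agq: "a > q" by simp
  have H: "height (\<alpha> / \<beta>) = ereal (real_of_int a)"
    unfolding height_def using inQ some qo agq qpos by simp
  have "bracket \<alpha> \<beta> = ereal (real_of_int a / \<alpha>)"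
    unfolding bracket_def H using assms by simp
  with assms(4) have "real_of_int a / \<alpha> \<le> \<alpha> / \<beta>" by simp
  hence "real_of_int a / \<alpha> \<le> real_of_int a / real_of_int q" using aq by simp
  hence qle: "real_of_int q \<le> \<alpha>" using apos qpos agq
    by (simp add: divide_le_eq le_divide_eq field_simps)
  have "\<alpha> / \<beta> = real n / real m"
    using eq mpos bpos by (simp add: field_simps)
  hence "real n / real m = real_of_int a / real_of_int q" using aq by simp
  hence "int n * q = int m * a" using mpos qpos by (simp add: field_simps) (metis of_int_eq_iff of_int_mult of_int_of_nat_eq)
  hence "q dvd int m * a" by (metis dvd_triv_right)
  hence qdm: "q dvd int m" using cop by (metis coprime_commute coprime_dvd_mult_left_iff)
  have "q \<noteq> 1"
  proof
    assume "q = 1"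
    hence "\<alpha> / \<beta> = real (nat a)" using aq agq by simp
    thus False using assms(3) by blast
  qed
  hence q2: "nat q \<noteq> 1" using qpos by simp
  obtain p where p: "prime p" "p dvd nat q" using q2 prime_factor_nat by blast
  have "nat q dvd m" using qdm qpos by (metis int_dvd_int_iff int_nat_eq less_imp_le)
  hence pm: "p dvd m" using p by (meson dvd_trans)
  have pq: "p \<le> nat q" using p qpos by (simp add: dvd_imp_le)
  have m1: "m \<noteq> 1" using pm p by auto
  have fin: "finite {p. prime p \<and> p dvd m}" using mpos by simp
  have "Min {p. prime p \<and> p dvd m} \<le> p" using fin p pm by (intro Min_le) auto
  hence "real (Min {p. prime p \<and> p dvd m}) \<le> \<alpha>" using pq qle qpos
    by (smt (verit) of_nat_le_iff of_nat_nat)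
  hence "Pminus m \<le> ereal \<alpha>" unfolding Pminus_def using m1 by simp
  thus False using big by simp
qed

end
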